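(* Let $\mathbf a=(a_1,\ldots,a_n)\in\mathbb Z_{\geq1}^n$ and $\mathbf b=(b_1,\ldots,b_m)\in\mathbb Z_{\geq1}^m$. Every minimal solution $(\mathbf x,\mathbf y)$ of $x_1a_1+\cdots+x_na_n=y_1b_1+\cdots+y_mb_m$ is a convex combination of $\mathbf 0\in\mathbb R^{n+m}$ and the generators $\mathbf g_{i,j}$ ($1\leq i\leq n$, $1\leq j\leq m$). Moreover, one can use at most $m+n-1$ nonzero generators in any such combination (i.e., there is such a convex combination in which at most $m+n-1$ generators have nonzero coefficient).
   Context: A solution is a pair $(\mathbf x,\mathbf y)\in\mathbb Z_{\geq0}^n\times\mathbb Z_{\geq0}^m$ with $\sum_i x_ia_i=\sum_j y_jb_j$; it is minimal if it is nonzero and cannot be written as the sum of two nonzero solutions. Let $\mathbf e_k$ be the $k$th standard unit vector of $\mathbb R^{n+m}$. For $1\leq i\leq n$, $1\leq j\leq m$, the generator $\mathbf g_{i,j}=b_j\mathbf e_i+a_i\mathbf e_{n+j}$ is the solution whose only nonzero coordinates are $x_i=b_j$ and $y_j=a_i$. *)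

theory Defs
  imports Complex_Main
begin

text \<open>Tuples are functions nat => _ indexed by 0..<n (resp. 0..<m); entries outside
  the index range are required to be zero for solutions.\<close>

definition is_solution :: "nat \<Rightarrow> nat \<Rightarrow> (nat \<Rightarrow> nat) \<Rightarrow> (nat \<Rightarrow> nat)
    \<Rightarrow> (nat \<Rightarrow> nat) \<Rightarrow> (nat \<Rightarrow> nat) \<Rightarrow> bool" where
  "is_solution n m a b x y \<longleftrightarrow>
     (\<forall>i\<ge>n. x i = 0) \<and> (\<forall>j\<ge>m. y j = 0) \<and>
     (\<Sum>i<n. x i * a i) = (\<Sum>j<m. y j * b j)"

definition nonzero_sol :: "nat \<Rightarrow> nat \<Rightarrow> (nat \<Rightarrow> nat) \<Rightarrow> (nat \<Rightarrow> nat) \<Rightarrow> bool" where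
  "nonzero_sol n m x y \<longleftrightarrow> (\<exists>i<n. x i \<noteq> 0) \<or> (\<exists>j<m. y j \<noteq> 0)"

definition minimal_solution :: "nat \<Rightarrow> nat \<Rightarrow> (nat \<Rightarrow> nat) \<Rightarrow> (nat \<Rightarrow> nat)
    \<Rightarrow> (nat \<Rightarrow> nat) \<Rightarrow> (nat \<Rightarrow> nat) \<Rightarrow> bool" where
  "minimal_solution n m a b x y \<longleftrightarrow>
     is_solution n m a b x y \<and> nonzero_sol n m x y \<and>
     \<not> (\<exists>x1 y1 x2 y2. is_solution n m a b x1 y1 \<and> nonzero_sol n m x1 y1 \<and>
          is_solution n m a b x2 y2 \<and> nonzero_sol n m x2 y2 \<and>
          x = (\<lambda>i. x1 i + x2 i) \<and> y = (\<lambda>j. y1 j + y2 j))"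

definition vec_of :: "nat \<Rightarrow> (nat \<Rightarrow> nat) \<Rightarrow> (nat \<Rightarrow> nat) \<Rightarrow> nat \<Rightarrow> real" where
  "vec_of n x y k = (if k < n then real (x k) else real (y (k - n)))"

text \<open>Generator g_{i,j} = b_j e_i + a_i e_{n+j} (0-based indices).\<close>

definition gen :: "nat \<Rightarrow> (nat \<Rightarrow> nat) \<Rightarrow> (nat \<Rightarrow> nat) \<Rightarrow> nat \<Rightarrow> nat \<Rightarrow> nat \<Rightarrow> real" where
  "gen n a b i j k = (if k = i then real (b j) else if k = n + j then real (a i) else 0)"

end

theory Submission
  imports Defs "HOL-Library.Multiset" "HOL-Library.Function_Algebras"
begin


lemma sum_take_drop: "sum_list (map f (take k L)) + sum_list (map f (drop k L)) = sum_list (map (f::'a\<Rightarrow>nat) L)"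
  by (metis append_take_drop_id map_append sum_list_append)

lemma sum_pos: "L \<noteq> [] \<Longrightarrow> \<forall>i\<in>set L. f i \<ge> (1::nat) \<Longrightarrow> sum_list (map f L) \<ge> 1"
  by (cases L) auto

lemma key_ineq:
  fixes La :: "nat list" and Lb :: "nat list" and a b :: "nat \<Rightarrow> nat"
  assumes ha: "\<forall>i\<in>set La. a i \<ge> 1" and hb: "\<forall>j\<in>set Lb. b j \<ge> 1"
    and S: "sum_list (map a La) = sum_list (map b Lb)"
    and nosplit: "\<And>A1 A2 B1 B2. mset (A1@A2) = mset La \<Longrightarrow> mset (B1@B2) = mset Lb \<Longrightarrow>
        sum_list (map a A1) = sum_list (map b B1) \<Longrightarrow> A1@B1 \<noteq> [] \<Longrightarrow> A2@B2 \<noteq> [] \<Longrightarrow> False"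
  shows "length La * length Lb \<le> sum_list (map a La)"
proof (cases "La = [] \<or> Lb = []")
  case True then show ?thesis by auto
next
  case False
  define S where "S = sum_list (map a La)"
  define X where "X = length La"
  define Y where "Y = length Lb"
  define P where "P k = sum_list (map a (take k La))" for k
  define Q where "Q l = sum_list (map b (take l Lb))" for l
  have SQ: "S = sum_list (map b Lb)" using S S_def by simp
  have Spos: "S \<ge> 1" using False ha sum_pos S_def by blast
  have aux: "k = k' \<and> l = l'" if kk: "k \<le> k'" "k' < X" "l < Y" "l' < Y"
     and md: "(int (P k) - int (Q l)) mod int S = (int (P k') - int (Q l')) mod int S" for k k' l l'
  proof -
    define seg where "seg = take (k'-k) (drop k La)"
    define rest where "rest = take k La @ drop k' La"
    have Pk': "P k' = P k + sum_list (map a seg)"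
      unfolding P_def seg_def using take_add[of k "k'-k" La] kk by simp
    have Ladec: "La = take k La @ seg @ drop k' La"
      unfolding seg_def using take_add[of k "k'-k" La] kk
      by (metis append.assoc append_take_drop_id le_add_diff_inverse)
    have msA: "mset (seg @ rest) = mset La"
      using arg_cong[OF Ladec, of mset] unfolding rest_def by (simp add: union_ac)
    have sumA: "sum_list (map a seg) + sum_list (map a rest) = S"
      using arg_cong[OF Ladec, of "\<lambda>L. sum_list (map a L)"] unfolding rest_def S_def by simp
    have dne: "drop k' La \<noteq> []" using kk X_def by simp
    have restne: "rest \<noteq> []" using dne rest_def by simp
    have "sum_list (map a (drop k' La)) \<ge> 1"
      using sum_pos[OF dne, of a] ha by (meson in_set_dropD)
    hence ps_lt: "sum_list (map a seg) < S"
      using arg_cong[OF Ladec, of "\<lambda>L. sum_list (map a L)"] unfolding S_def by simp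
    have segnil: "seg = [] \<longleftrightarrow> k = k'" using kk X_def seg_def by auto
    show ?thesis
    proof (cases "l \<le> l'")
      case True
      define segb where "segb = take (l'-l) (drop l Lb)"
      define restb where "restb = take l Lb @ drop l' Lb"
      have Ql': "Q l' = Q l + sum_list (map b segb)"
        unfolding Q_def segb_def using take_add[of l "l'-l" Lb] True by simp
      have Lbdec: "Lb = take l Lb @ segb @ drop l' Lb"
        unfolding segb_def using take_add[of l "l'-l" Lb] True
        by (metis append.assoc append_take_drop_id le_add_diff_inverse)
      have msB: "mset (segb @ restb) = mset Lb"
        using arg_cong[OF Lbdec, of mset] unfolding restb_def by (simp add: union_ac)
      have dneb: "drop l' Lb \<noteq> []" using kk Y_def by simp
      have "sum_list (map b (drop l' Lb)) \<ge> 1"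
        using sum_pos[OF dneb, of b] hb by (meson in_set_dropD)
      hence qs_lt: "sum_list (map b segb) < S"
        using arg_cong[OF Lbdec, of "\<lambda>L. sum_list (map b L)"] unfolding SQ by simp
      have segbnil: "segb = [] \<longleftrightarrow> l = l'" using kk True Y_def segb_def by auto
      have "int S dvd (int (P k') - int (Q l')) - (int (P k) - int (Q l))"
        using md by (metis mod_eq_dvd_iff)
      hence dv: "int S dvd int (sum_list (map a seg)) - int (sum_list (map b segb))"
        using Pk' Ql' by (simp add: algebra_simps)
      have "int (sum_list (map a seg)) - int (sum_list (map b segb)) = 0"
      proof (rule ccontr)
        assume "int (sum_list (map a seg)) - int (sum_list (map b segb)) \<noteq> 0"
        from dvd_imp_le_int[OF this dv] ps_lt qs_lt show False by linarith
      qed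
      hence eq: "sum_list (map a seg) = sum_list (map b segb)" by simp
      show ?thesis
      proof (rule ccontr)
        assume "\<not> ?thesis"
        hence "seg @ segb \<noteq> []" using segnil segbnil by simp
        from nosplit[OF msA msB eq this] restne show False by simp
      qed
    next
      case False
      define segb where "segb = take (l-l') (drop l' Lb)"
      define restb where "restb = take l' Lb @ drop l Lb"
      have Ql: "Q l = Q l' + sum_list (map b segb)"
        unfolding Q_def segb_def using take_add[of l' "l-l'" Lb] False by simp
      have Lbdec: "Lb = take l' Lb @ segb @ drop l Lb"
        unfolding segb_def using take_add[of l' "l-l'" Lb] False
        by (metis append.assoc append_take_drop_id le_add_diff_inverse nat_le_linear)
      have msB: "mset (restb @ segb) = mset Lb"
        using arg_cong[OF Lbdec, of mset] unfolding restb_def by (simp add: union_ac)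
      have sumB: "sum_list (map b restb) + sum_list (map b segb) = S"
        using arg_cong[OF Lbdec, of "\<lambda>L. sum_list (map b L)"] unfolding restb_def SQ by simp
      have dneb: "drop l Lb \<noteq> []" using kk Y_def by simp
      have segbne: "segb \<noteq> []" using False kk Y_def segb_def by auto
      have qs_pos: "sum_list (map b segb) \<ge> 1"
        using sum_pos[OF segbne, of b] hb unfolding segb_def by (meson in_set_dropD in_set_takeD)
      have "sum_list (map b restb) \<ge> 1"
        using sum_pos[of restb b] hb dneb unfolding restb_def
        by (metis Un_iff append_is_Nil_conv in_set_dropD in_set_takeD set_append)
      hence qs_lt: "sum_list (map b segb) < S" using sumB by simp
      have "int S dvd (int (P k') - int (Q l')) - (int (P k) - int (Q l))"
        using md by (metis mod_eq_dvd_iff)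
      hence "int S dvd int (sum_list (map a seg) + sum_list (map b segb))"
        using Pk' Ql by (simp add: algebra_simps)
      hence dv: "S dvd sum_list (map a seg) + sum_list (map b segb)" by presburger
      have ge: "S \<le> sum_list (map a seg) + sum_list (map b segb)"
        using dvd_imp_le[OF dv] qs_pos by simp
      have "S dvd sum_list (map a seg) + sum_list (map b segb) - S"
        using dv by (simp add: dvd_diff_nat)
      moreover have "sum_list (map a seg) + sum_list (map b segb) - S < S" using ps_lt qs_lt by simp
      ultimately have "sum_list (map a seg) + sum_list (map b segb) - S = 0"
        by (metis dvd_imp_le neq0_conv not_le)
      hence eq: "sum_list (map a seg) = sum_list (map b restb)" using ge sumB by simp
      have "seg @ restb \<noteq> []" using dneb restb_def by simp
      from nosplit[OF msA msB eq this] segbne have False by simp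
      then show ?thesis ..
    qed
  qed
  define f where "f = (\<lambda>(k,l). (int (P k) - int (Q l)) mod int S)"
  have inj: "inj_on f ({..<X} \<times> {..<Y})"
  proof (rule inj_onI, clarsimp)
    fix k l k' l'
    assume h: "k < X" "l < Y" "k' < X" "l' < Y" "f (k, l) = f (k', l')"
    show "k = k' \<and> l = l'"
    proof (cases "k \<le> k'")
      case True then show ?thesis using aux[of k k' l l'] h f_def by simp
    next
      case False then show ?thesis using aux[of k' k l' l] h f_def by simp
    qed
  qed
  have "f ` ({..<X} \<times> {..<Y}) \<subseteq> {0..<int S}"
    using Spos unfolding f_def by auto
  from card_inj_on_le[OF inj this] have "card ({..<X} \<times> {..<Y}) \<le> card {0..<int S}" by simp
  thus ?thesis unfolding X_def Y_def S_def by (simp add: card_cartesian_product)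
qed



interpretation fv: vector_space "\<lambda>(r::real) (f::nat\<Rightarrow>real). (\<lambda>k. r * f k)"
  by unfold_locales (auto simp: fun_eq_iff algebra_simps)

lemma sum_fun_apply: "(\<Sum>x\<in>A. f x) (k::nat) = (\<Sum>x\<in>A. f x k)"
  by (induct A rule: infinite_finite_induct) auto

lemma reduce:
  fixes G :: "'e \<Rightarrow> nat \<Rightarrow> real" and D :: "'e set" and T :: "(nat\<Rightarrow>real) set"
  assumes fD: "finite D" and fT: "finite T" and inj: "inj_on G D" and sp: "G ` D \<subseteq> fv.span T"
  shows "(\<forall>e\<in>D. c e \<ge> 0) \<Longrightarrow> sum c D \<le> 1 \<Longrightarrow> (\<forall>k\<in>K. V k = (\<Sum>e\<in>D. c e * G e k)) \<Longrightarrow>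
    \<exists>c'. (\<forall>e\<in>D. c' e \<ge> 0) \<and> sum c' D \<le> 1 \<and> (\<forall>k\<in>K. V k = (\<Sum>e\<in>D. c' e * G e k))
       \<and> card {e\<in>D. c' e \<noteq> 0} \<le> card T"
proof (induction "card {e\<in>D. c e \<noteq> 0}" arbitrary: c rule: less_induct)
  case less
  define Sp where "Sp = {e\<in>D. c e \<noteq> 0}"
  have fSp: "finite Sp" using fD Sp_def by simp
  show ?case
  proof (cases "card Sp \<le> card T")
    case True then show ?thesis using less.prems Sp_def by blast
  next
    case False
    define W where "W = G ` Sp"
    have injS: "inj_on G Sp" using inj Sp_def by (auto intro: inj_on_subset)
    have cW: "card W = card Sp" using injS W_def card_image by blast
    have WT: "W \<subseteq> fv.span T" using sp W_def Sp_def by auto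
    have "fv.dependent W"
    proof (rule ccontr)
      assume "\<not> fv.dependent W"
      from fv.independent_span_bound[OF fT this WT] cW False show False by simp
    qed
    then obtain u where u1: "\<exists>v\<in>W. u v \<noteq> 0" and u2: "(\<Sum>v\<in>W. (\<lambda>k. u v * v k)) = 0"
      using fv.dependent_finite[of W] fSp W_def by auto
    define d0 where "d0 e = (if e \<in> Sp then u (G e) else 0)" for e
    have d0G: "(\<Sum>e\<in>D. d0 e * G e k) = 0" for k
    proof -
      have "(\<Sum>e\<in>D. d0 e * G e k) = (\<Sum>e\<in>Sp. d0 e * G e k)"
        by (rule sum.mono_neutral_right) (auto simp: fD Sp_def d0_def)
      also have "\<dots> = (\<Sum>e\<in>Sp. u (G e) * G e k)" by (simp add: d0_def)
      also have "\<dots> = (\<Sum>v\<in>W. u v * v k)" unfolding W_def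
        by (rule sum.reindex[OF injS, symmetric, unfolded comp_def])
      also have "\<dots> = 0" using arg_cong[OF u2, of "\<lambda>f. f k"] by (simp add: sum_fun_apply)
      finally show ?thesis .
    qed
    define d where "d e = (if sum d0 D > 0 then - d0 e else d0 e)" for e
    have dG: "(\<Sum>e\<in>D. d e * G e k) = 0" for k
      using d0G[of k] by (cases "sum d0 D > 0") (simp_all add: d_def sum_negf)
    have dsum: "sum d D \<le> 0" by (cases "sum d0 D > 0") (simp_all add: d_def sum_negf)
    have dout: "e \<notin> Sp \<Longrightarrow> d e = 0" for e by (simp add: d_def d0_def)
    have dnz: "\<exists>e\<in>Sp. d e \<noteq> 0" using u1 W_def by (auto simp: d_def d0_def)
    have "\<exists>e\<in>Sp. d e < 0"
    proof (rule ccontr)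
      assume "\<not> ?thesis"
      hence nn: "\<forall>e\<in>D. d e \<ge> 0" using dout by (metis not_le order_refl)
      hence "sum d D = 0" using dsum by (meson antisym sum_nonneg)
      hence "\<forall>e\<in>D. d e = 0" using sum_nonneg_eq_0_iff[OF fD] nn by blast
      thus False using dnz Sp_def by auto
    qed
    define N where "N = {e\<in>Sp. d e < 0}"
    have fN: "finite N" "N \<noteq> {}" using fSp N_def \<open>\<exists>e\<in>Sp. d e < 0\<close> by auto
    define R where "R = (\<lambda>e. c e / (- d e)) ` N"
    define t where "t = Min R"
    have fR: "finite R" "R \<noteq> {}" using fN R_def by auto
    obtain e0 where e0: "e0 \<in> N" "t = c e0 / (- d e0)"
      using Min_in[OF fR] unfolding t_def R_def by auto
    have tle: "e \<in> N \<Longrightarrow> t \<le> c e / (- d e)" for e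
      unfolding t_def using fR by (intro Min_le) (auto simp: R_def)
    have cpos: "e \<in> Sp \<Longrightarrow> c e > 0" for e using less.prems(1) Sp_def by force
    have t0: "t \<ge> 0"
    proof -
      have "d e0 < 0" "c e0 > 0" using e0 cpos N_def by auto
      hence "c e0 / (- d e0) \<ge> 0" by (intro divide_nonneg_nonneg) auto
      thus ?thesis using e0 by simp
    qed
    define c' where "c' e = c e + t * d e" for e
    have c'nn: "\<forall>e\<in>D. c' e \<ge> 0"
    proof
      fix e assume eD: "e \<in> D"
      show "c' e \<ge> 0"
      proof (cases "d e < 0")
        case True
        have "e \<in> Sp" using dout True by force
        hence eN: "e \<in> N" using True N_def by simp
        have "-d e > 0" using True by simp
        from tle[OF eN] pos_le_divide_eq[OF this, of t "c e"] have "t * (- d e) \<le> c e" by blast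
        thus ?thesis by (simp add: c'_def)
      next
        case False thus ?thesis using less.prems(1) eD t0 by (simp add: c'_def)
      qed
    qed
    have c'sum: "sum c' D \<le> 1"
    proof -
      have "sum c' D = sum c D + t * sum d D" by (simp add: c'_def sum.distrib sum_distrib_left)
      also have "\<dots> \<le> sum c D" using t0 dsum by (simp add: mult_nonneg_nonpos)
      finally show ?thesis using less.prems(2) by simp
    qed
    have c'V: "\<forall>k\<in>K. V k = (\<Sum>e\<in>D. c' e * G e k)"
    proof
      fix k assume "k \<in> K"
      have "(\<Sum>e\<in>D. c' e * G e k) = (\<Sum>e\<in>D. c e * G e k) + t * (\<Sum>e\<in>D. d e * G e k)"
        by (simp add: c'_def algebra_simps sum.distrib sum_distrib_left)
      thus "V k = (\<Sum>e\<in>D. c' e * G e k)" using dG less.prems(3) \<open>k\<in>K\<close> by simp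
    qed
    have "{e\<in>D. c' e \<noteq> 0} \<subseteq> Sp - {e0}"
    proof -
      have "c' e0 = 0" using e0 N_def by (simp add: c'_def)
      moreover have "e \<notin> Sp \<Longrightarrow> e \<in> D \<Longrightarrow> c' e = 0" for e using dout Sp_def by (simp add: c'_def)
      ultimately show ?thesis by auto
    qed
    moreover have "e0 \<in> Sp" using e0 N_def by simp
    ultimately have "card {e\<in>D. c' e \<noteq> 0} < card Sp"
      using fSp by (meson card_Diff1_less card_mono finite_Diff le_less_trans)
    from less.hyps[OF this[unfolded Sp_def] c'nn c'sum c'V] show ?thesis .
  qed
qed



lemma sumlist_count: "set L \<subseteq> {..<n} \<Longrightarrow> sum_list (map (f::nat\<Rightarrow>nat) L) = (\<Sum>i<n. count (mset L) i * f i)"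
proof (induction L)
  case Nil then show ?case by simp
next
  case (Cons h L)
  have hn: "h < n" using Cons.prems by auto
  have "(\<Sum>i<n. count (mset (h#L)) i * f i) = (\<Sum>i<n. count (mset L) i * f i) + (\<Sum>i<n. (if h = i then f i else 0))"
  proof -
    have "count (mset (h#L)) i = count (mset L) i + (if h = i then 1 else 0)" for i by simp
    thus ?thesis by (subst sum.distrib[symmetric]) (rule sum.cong, auto)
  qed
  also have "(\<Sum>i<n. (if h = i then f i else 0)) = f h" using hn by (simp add: sum.delta)
  finally show ?case using Cons by simp
qed

lemma count_La: "count (mset (concat (map (\<lambda>i. replicate (x i) i) [0..<n]))) i = (if i < n then x i else 0)"
  by (induction n) (auto simp: mset_replicate)

lemma gen_span:
  assumes "n \<ge> 1" "m \<ge> 1" "a 0 \<ge> 1" "b 0 \<ge> 1" "i < n" "j < m"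
  shows "gen n a b i j \<in> fv.span ((\<lambda>i. gen n a b i 0) ` {..<n} \<union> (\<lambda>j. gen n a b 0 j) ` {1..<m})"
proof -
  let ?T = "(\<lambda>i. gen n a b i 0) ` {..<n} \<union> (\<lambda>j. gen n a b 0 j) ` {1..<m}"
  have T1: "gen n a b i 0 \<in> ?T" using assms by auto
  have T0: "gen n a b 0 0 \<in> ?T" using assms by auto
  have T2: "gen n a b 0 j \<in> ?T" using assms by (cases "j = 0") auto
  have eq: "gen n a b i j = (\<lambda>k. (real (b j) / real (b 0)) * gen n a b i 0 k) + (\<lambda>k. (real (a i) / real (a 0)) * gen n a b 0 j k)
     - (\<lambda>k. (real (a i) * real (b j) / (real (a 0) * real (b 0))) * gen n a b 0 0 k)"
    using assms by (auto simp: fun_eq_iff gen_def field_simps)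
  show ?thesis unfolding eq
    by (intro fv.span_add fv.span_diff fv.span_scale fv.span_base T0 T1 T2)
qed

theorem corollary2:
  fixes n m :: nat and a b x y :: "nat \<Rightarrow> nat"
  assumes "\<forall>i<n. a i \<ge> 1" and "\<forall>j<m. b j \<ge> 1"
    and "minimal_solution n m a b x y"
  shows "\<exists>(c0::real) (c :: nat \<Rightarrow> nat \<Rightarrow> real).
     c0 \<ge> 0 \<and> (\<forall>i<n. \<forall>j<m. c i j \<ge> 0) \<and>
     c0 + (\<Sum>i<n. \<Sum>j<m. c i j) = 1 \<and>
     (\<forall>k<n + m. vec_of n x y k = c0 * 0 + (\<Sum>i<n. \<Sum>j<m. c i j * gen n a b i j k)) \<and>
     card {(i, j). i < n \<and> j < m \<and> c i j \<noteq> 0} \<le> m + n - 1"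
proof -
  have sol: "is_solution n m a b x y" and nz: "nonzero_sol n m x y"
    and nosub: "\<not> (\<exists>x1 y1 x2 y2. is_solution n m a b x1 y1 \<and> nonzero_sol n m x1 y1 \<and>
          is_solution n m a b x2 y2 \<and> nonzero_sol n m x2 y2 \<and>
          x = (\<lambda>i. x1 i + x2 i) \<and> y = (\<lambda>j. y1 j + y2 j))"
    using assms(3) unfolding minimal_solution_def by auto
  have hx: "\<forall>i\<ge>n. x i = 0" and hy: "\<forall>j\<ge>m. y j = 0"
    and eqS: "(\<Sum>i<n. x i * a i) = (\<Sum>j<m. y j * b j)" using sol unfolding is_solution_def by auto
  define S where "S = (\<Sum>i<n. x i * a i)"
  have Spos: "S > 0"
  proof -
    from nz show ?thesis unfolding nonzero_sol_def
    proof
      assume "\<exists>i<n. x i \<noteq> 0"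
      then obtain i where "i < n" "x i \<noteq> 0" by blast
      hence "x i * a i > 0" using assms(1) by auto
      thus ?thesis unfolding S_def using \<open>i<n\<close>
        by (metis (no_types, lifting) bot_nat_0.not_eq_extremum finite_lessThan lessThan_iff sum_eq_0_iff)
    next
      assume "\<exists>j<m. y j \<noteq> 0"
      then obtain j where "j < m" "y j \<noteq> 0" by blast
      hence "y j * b j > 0" using assms(2) by auto
      thus ?thesis unfolding S_def eqS using \<open>j<m\<close>
        by (metis (no_types, lifting) bot_nat_0.not_eq_extremum finite_lessThan lessThan_iff sum_eq_0_iff)
    qed
  qed
  have n1: "n \<ge> 1"
  proof (rule ccontr)
    assume "\<not> n \<ge> 1" hence "n = 0" by simp
    thus False using Spos S_def by simp
  qed
  have m1: "m \<ge> 1"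
  proof (rule ccontr)
    assume "\<not> m \<ge> 1" hence "m = 0" by simp
    thus False using Spos S_def eqS by simp
  qed
  define La where "La = concat (map (\<lambda>i. replicate (x i) i) [0..<n])"
  define Lb where "Lb = concat (map (\<lambda>j. replicate (y j) j) [0..<m])"
  have cLa: "count (mset La) i = x i" for i using count_La[of x n i] hx La_def by auto
  have cLb: "count (mset Lb) j = y j" for j using count_La[of y m j] hy Lb_def by auto
  have sLa: "set La \<subseteq> {..<n}" unfolding La_def by auto
  have sLb: "set Lb \<subseteq> {..<m}" unfolding Lb_def by auto
  have sumLa: "sum_list (map a La) = S" using sumlist_count[OF sLa, of a] cLa S_def by simp
  have sumLb: "sum_list (map b Lb) = S" using sumlist_count[OF sLb, of b] cLb S_def eqS by simp
  have l1: "sum_list (map (\<lambda>_. 1::nat) L) = length L" for L :: "nat list" by (induct L) auto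
  have lenLa: "length La = (\<Sum>i<n. x i)" using sumlist_count[OF sLa, of "\<lambda>_. 1"] cLa l1 by simp
  have lenLb: "length Lb = (\<Sum>j<m. y j)" using sumlist_count[OF sLb, of "\<lambda>_. 1"] cLb l1 by simp

  have XY: "(\<Sum>i<n. x i) * (\<Sum>j<m. y j) \<le> S"
  proof -
    have "length La * length Lb \<le> sum_list (map a La)"
    proof (rule key_ineq)
      show "\<forall>i\<in>set La. a i \<ge> 1" using sLa assms(1) by auto
      show "\<forall>j\<in>set Lb. b j \<ge> 1" using sLb assms(2) by auto
      show "sum_list (map a La) = sum_list (map b Lb)" using sumLa sumLb by simp
    next
      fix A1 A2 B1 B2
      assume mA: "mset (A1 @ A2) = mset La" and mB: "mset (B1 @ B2) = mset Lb"
        and e1: "sum_list (map a A1) = sum_list (map b B1)"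
        and ne1: "A1 @ B1 \<noteq> []" and ne2: "A2 @ B2 \<noteq> []"
      define x1 where "x1 i = count (mset A1) i" for i
      define x2 where "x2 i = count (mset A2) i" for i
      define y1 where "y1 j = count (mset B1) j" for j
      define y2 where "y2 j = count (mset B2) j" for j
      have setA: "set A1 \<subseteq> {..<n}" "set A2 \<subseteq> {..<n}"
        using arg_cong[OF mA, of set_mset] sLa by auto
      have setB: "set B1 \<subseteq> {..<m}" "set B2 \<subseteq> {..<m}"
        using arg_cong[OF mB, of set_mset] sLb by auto
      have xs: "x = (\<lambda>i. x1 i + x2 i)"
        using arg_cong[OF mA, of "\<lambda>M. count M i" for i] cLa unfolding x1_def x2_def
        by (auto simp: fun_eq_iff)
      have ys: "y = (\<lambda>j. y1 j + y2 j)"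
        using arg_cong[OF mB, of "\<lambda>M. count M j" for j] cLb unfolding y1_def y2_def
        by (auto simp: fun_eq_iff)
      have sa1: "(\<Sum>i<n. x1 i * a i) = sum_list (map a A1)" using sumlist_count[OF setA(1)] x1_def by simp
      have sa2: "(\<Sum>i<n. x2 i * a i) = sum_list (map a A2)" using sumlist_count[OF setA(2)] x2_def by simp
      have sb1: "(\<Sum>j<m. y1 j * b j) = sum_list (map b B1)" using sumlist_count[OF setB(1)] y1_def by simp
      have sb2: "(\<Sum>j<m. y2 j * b j) = sum_list (map b B2)" using sumlist_count[OF setB(2)] y2_def by simp
      have "(\<Sum>i<n. x i * a i) = (\<Sum>i<n. x1 i * a i) + (\<Sum>i<n. x2 i * a i)"
        unfolding xs by (simp add: sum.distrib distrib_right)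
      moreover have "(\<Sum>j<m. y j * b j) = (\<Sum>j<m. y1 j * b j) + (\<Sum>j<m. y2 j * b j)"
        unfolding ys by (simp add: sum.distrib distrib_right)
      ultimately have e2: "(\<Sum>i<n. x2 i * a i) = (\<Sum>j<m. y2 j * b j)"
        using eqS e1 sa1 sb1 by linarith
      have zx1: "\<forall>i\<ge>n. x1 i = 0" using setA(1) x1_def by auto
      have zx2: "\<forall>i\<ge>n. x2 i = 0" using setA(2) x2_def by auto
      have zy1: "\<forall>j\<ge>m. y1 j = 0" using setB(1) y1_def by auto
      have zy2: "\<forall>j\<ge>m. y2 j = 0" using setB(2) y2_def by auto
      have s1: "is_solution n m a b x1 y1" unfolding is_solution_def using zx1 zy1 sa1 sb1 e1 by simp
      have s2: "is_solution n m a b x2 y2" unfolding is_solution_def using zx2 zy2 e2 by simp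
      have nzl: "nonzero_sol n m (\<lambda>i. count (mset A) i) (\<lambda>j. count (mset B) j)"
        if "A @ B \<noteq> []" "set A \<subseteq> {..<n}" "set B \<subseteq> {..<m}" for A B :: "nat list"
      proof (cases "A = []")
        case False
        then obtain h where "h \<in> set A" by (cases A) auto
        thus ?thesis using that unfolding nonzero_sol_def by (metis count_eq_zero_iff lessThan_iff set_mset_mset subsetD)
      next
        case True
        then have "B \<noteq> []" using that by simp
        then obtain h where "h \<in> set B" by (cases B) auto
        thus ?thesis using that unfolding nonzero_sol_def by (metis count_eq_zero_iff lessThan_iff set_mset_mset subsetD)
      qed
      have n1': "nonzero_sol n m x1 y1" using nzl[OF ne1 setA(1) setB(1)] 
        unfolding x1_def[abs_def] y1_def[abs_def] by simp
      have n2': "nonzero_sol n m x2 y2" using nzl[OF ne2 setA(2) setB(2)] 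
        unfolding x2_def[abs_def] y2_def[abs_def] by simp
      show False using nosub s1 s2 n1' n2' xs ys by blast
    qed
    thus ?thesis using lenLa lenLb sumLa by simp
  qed

  define D where "D = {..<n} \<times> {..<m}"
  define G where "G = (\<lambda>(i,j). gen n a b i j)"
  define T where "T = (\<lambda>i. gen n a b i 0) ` {..<n} \<union> (\<lambda>j. gen n a b 0 j) ` {1..<m}"
  define c where "c = (\<lambda>(i,j). real (x i) * real (y j) / real S)"
  have fD: "finite D" and fT: "finite T" unfolding D_def T_def by auto
  have cT: "card T \<le> m + n - 1"
  proof -
    have "card T \<le> card ((\<lambda>i. gen n a b i 0) ` {..<n}) + card ((\<lambda>j. gen n a b 0 j) ` {1..<m})"
      unfolding T_def by (rule card_Un_le)
    also have "\<dots> \<le> n + (m - 1)" using card_image_le[of "{..<n}" "\<lambda>i. gen n a b i 0"]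
      card_image_le[of "{1..<m}" "\<lambda>j. gen n a b 0 j"] by simp
    finally show ?thesis using m1 by simp
  qed
  have injG: "inj_on G D"
  proof (rule inj_onI, clarsimp simp: D_def G_def)
    fix i j i' j'
    assume h: "i < n" "j < m" "i' < n" "j' < m" "gen n a b i j = gen n a b i' j'"
    have "gen n a b i j i = real (b j)" by (simp add: gen_def)
    moreover have "b j \<ge> 1" using assms(2) h by simp
    ultimately have "gen n a b i' j' i \<noteq> 0" using h(5) by simp
    hence ii: "i = i'" using h by (auto simp: gen_def split: if_splits)
    have "gen n a b i j (n + j) = real (a i)" using h(1,2) by (simp add: gen_def)
    moreover have "a i \<ge> 1" using assms(1) h by simp
    moreover have "gen n a b i j (n + j) = gen n a b i' j' (n + j)" using h(5) by simp
    ultimately have "gen n a b i' j' (n+j) \<noteq> 0" by simp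
    hence "j = j'" using h by (auto simp: gen_def split: if_splits)
    with ii show "i = i' \<and> j = j'" by simp
  qed
  have spG: "G ` D \<subseteq> fv.span T"
    using gen_span[OF n1 m1, of a b] assms(1,2) n1 m1 unfolding D_def G_def T_def by auto
  have Sr: "real S = (\<Sum>i<n. real (x i) * real (a i))" unfolding S_def by simp
  have Sr2: "real S = (\<Sum>j<m. real (y j) * real (b j))" unfolding S_def eqS by simp
  have Srpos: "real S > 0" using Spos by simp
  have cnn: "\<forall>e\<in>D. c e \<ge> 0" unfolding c_def by auto
  have dbl: "sum f D = (\<Sum>i<n. \<Sum>j<m. f (i,j))" for f :: "nat \<times> nat \<Rightarrow> real"
    unfolding D_def by (simp add: sum.cartesian_product)
  have csum: "sum c D \<le> 1"
  proof -
    have "sum c D = (\<Sum>i<n. \<Sum>j<m. real (x i) * real (y j)) / real S"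
      unfolding dbl c_def by (simp add: sum_divide_distrib)
    also have "\<dots> = real ((\<Sum>i<n. x i) * (\<Sum>j<m. y j)) / real S"
      by (simp add: sum_product)
    also have "\<dots> \<le> 1"
    proof -
      have "real ((\<Sum>i<n. x i) * (\<Sum>j<m. y j)) \<le> real S" using XY by (simp only: of_nat_le_iff)
      thus ?thesis using Srpos by simp
    qed
    finally show ?thesis .
  qed
  have cV: "\<forall>k\<in>{..<n+m}. vec_of n x y k = (\<Sum>e\<in>D. c e * G e k)"
  proof
    fix k assume "k \<in> {..<n+m}"
    hence k: "k < n + m" by simp
    have E: "(\<Sum>e\<in>D. c e * G e k) = (\<Sum>i<n. \<Sum>j<m. real (x i) * real (y j) / real S * gen n a b i j k)"
      unfolding dbl c_def G_def by simp
    show "vec_of n x y k = (\<Sum>e\<in>D. c e * G e k)"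
    proof (cases "k < n")
      case True
      have "(\<Sum>i<n. \<Sum>j<m. real (x i) * real (y j) / real S * gen n a b i j k)
          = (\<Sum>i<n. if i = k then (\<Sum>j<m. real (x k) * real (y j) / real S * real (b j)) else 0)"
        using True by (intro sum.cong refl) (auto simp: gen_def)
      also have "\<dots> = (\<Sum>j<m. real (x k) * real (y j) / real S * real (b j))"
        using True by (simp add: sum.delta')
      also have "\<dots> = real (x k) * (\<Sum>j<m. real (y j) * real (b j)) / real S"
        by (simp add: sum_distrib_left sum_divide_distrib algebra_simps)
      also have "\<dots> = real (x k)" using Sr2 Srpos by simp
      finally show ?thesis using E True by (simp add: vec_of_def)
    next
      case False
      define j0 where "j0 = k - n"
      have kj: "k = n + j0" "j0 < m" using False k j0_def by auto
      have "(\<Sum>i<n. \<Sum>j<m. real (x i) * real (y j) / real S * gen n a b i j k)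
          = (\<Sum>i<n. \<Sum>j<m. if j = j0 then real (x i) * real (y j0) / real S * real (a i) else 0)"
        using kj by (intro sum.cong refl) (auto simp: gen_def)
      also have "\<dots> = (\<Sum>i<n. real (x i) * real (y j0) / real S * real (a i))"
        using kj by (simp add: sum.delta')
      also have "\<dots> = real (y j0) * (\<Sum>i<n. real (x i) * real (a i)) / real S"
        by (simp add: sum_distrib_left sum_divide_distrib algebra_simps)
      also have "\<dots> = real (y j0)" using Sr Srpos by simp
      finally show ?thesis using E False kj by (simp add: vec_of_def)
    qed
  qed
  obtain c' where c'1: "\<forall>e\<in>D. c' e \<ge> 0" and c'2: "sum c' D \<le> 1"
    and c'3: "\<forall>k\<in>{..<n+m}. vec_of n x y k = (\<Sum>e\<in>D. c' e * G e k)"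
    and c'4: "card {e\<in>D. c' e \<noteq> 0} \<le> card T"
    using reduce[OF fD fT injG spG cnn csum cV] by blast
  have cardeq: "{(i, j). i < n \<and> j < m \<and> c' (i,j) \<noteq> 0} = {e\<in>D. c' e \<noteq> 0}"
    unfolding D_def by auto
  show ?thesis
  proof (intro exI[of _ "1 - sum c' D"] exI[of _ "\<lambda>i j. c' (i,j)"] conjI allI impI)
    show "0 \<le> 1 - sum c' D" using c'2 by simp
    show "0 \<le> c' (i, j)" if "i < n" "j < m" for i j using c'1 that D_def by auto
    show "1 - sum c' D + (\<Sum>i<n. \<Sum>j<m. c' (i, j)) = 1" using dbl[of c'] by simp
    show "vec_of n x y k = (1 - sum c' D) * 0 + (\<Sum>i<n. \<Sum>j<m. c' (i, j) * gen n a b i j k)"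
      if "k < n + m" for k using c'3 that dbl[of "\<lambda>e. c' e * G e k"] by (simp add: G_def)
    show "card {(i, j). i < n \<and> j < m \<and> c' (i, j) \<noteq> 0} \<le> m + n - 1"
      using cardeq c'4 cT by simp
  qed
qed
end
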